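(* Let $(X,d)$ be a compact metric space without isolated points which has the property*. If $f\in\mathcal{H}(X)$ is topologically stable, then $f$ has the shadowing property and the strict periodic shadowing property; in particular $CR(f)=\overline{Per(f)}$.
   Context: $\mathcal{H}(X)$ is the set of homeomorphisms of $X$; $d_{C^0}(f,g)=\sup_{x}d(f(x),g(x))$ for continuous maps, and $D(f,g)=\max\{d_{C^0}(f,g),d_{C^0}(f^{-1},g^{-1})\}$ for homeomorphisms. $f\in\mathcal{H}(X)$ is topologically stable if for every $\epsilon>0$ there is $\delta>0$ such that for every $g\in\mathcal{H}(X)$ with $D(f,g)<\delta$ there is a continuous $h:X\to X$ with $d_{C^0}(h,\mathrm{id}_X)<\epsilon$ and $h\circ g=f\circ h$. A finite sequence $(x_i)_{i=0}^k$ ($k\ge1$) is a $\delta$-chain if $d(f(x_i),x_{i+1})\le\delta$ for $0\le i\le k-1$, and a $\delta$-cycle if moreover $x_0=x_k$. A sequence $(x_i)_{i\ge0}$ is a $\delta$-pseudo orbit if $d(f(x_i),x_{i+1})\le\delta$ for all $i\ge0$; it is $\epsilon$-shadowed by $x$ if $d(x_i,f^i(x))\le\epsilon$ for all $i\ge0$. $f$ has the shadowing property if for every $\epsilon>0$ there is $\delta>0$ such that every $\delta$-pseudo orbit is $\epsilon$-shadowed by some point. $f$ has the strict periodic shadowing property if for every $\epsilon>0$ there is $\delta>0$ such that for every $\delta$-cycle $(x_i)_{i=0}^m$ ($m\ge1$) there is $p\in X$ with $f^m(p)=p$ and $d(x_i,f^i(p))\le\epsilon$ for $0\le i\le m$.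 $Per(f)$ is the set of periodic points; $CR(f)$ is the set of chain recurrent points, i.e. $x$ such that for every $\delta>0$ there is a $\delta$-cycle $(x_i)_{i=0}^k$ with $x_0=x_k=x$. Property*: for every $\epsilon>0$ there is $\delta>0$ such that for every $n\ge1$ and all proper $n$-tuples $\zeta=(x_1,\dots,x_n),\eta=(y_1,\dots,y_n)\in X^n$ (proper meaning pairwise distinct entries) with $\max_i d(x_i,y_i)<\delta$, there is $\phi\in\mathcal{H}(X)$ with $D(\phi,\mathrm{id}_X)<\epsilon$ and $\phi(x_i)=y_i$ for all $i$. *)

theory Defs
  imports "HOL-Analysis.Analysis"
begin

definition homeos :: "'a::metric_space set \<Rightarrow> ('a \<Rightarrow> 'a) set" where
  "homeos X = {f. \<exists>g. homeomorphism X X f g}"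

definition dC0 :: "'a::metric_space set \<Rightarrow> ('a \<Rightarrow> 'a) \<Rightarrow> ('a \<Rightarrow> 'a) \<Rightarrow> real" where
  "dC0 X f g = (SUP x\<in>X. dist (f x) (g x))"

definition Dhom :: "'a::metric_space set \<Rightarrow> ('a \<Rightarrow> 'a) \<Rightarrow> ('a \<Rightarrow> 'a) \<Rightarrow> real" where
  "Dhom X f g = max (dC0 X f g) (dC0 X (inv_into X f) (inv_into X g))"

definition topologically_stable :: "'a::metric_space set \<Rightarrow> ('a \<Rightarrow> 'a) \<Rightarrow> bool" where
  "topologically_stable X f \<longleftrightarrow>
     (\<forall>\<epsilon>>0. \<exists>\<delta>>0. \<forall>g\<in>homeos X. Dhom X f g < \<delta> \<longrightarrow>
        (\<exists>h. continuous_on X h \<and> h ` X \<subseteq> X \<and> dC0 X h id < \<epsilon> \<and>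
             (\<forall>x\<in>X. h (g x) = f (h x))))"

definition shadowing :: "'a::metric_space set \<Rightarrow> ('a \<Rightarrow> 'a) \<Rightarrow> bool" where
  "shadowing X f \<longleftrightarrow>
     (\<forall>\<epsilon>>0. \<exists>\<delta>>0. \<forall>xs::nat \<Rightarrow> 'a.
        ((\<forall>i. xs i \<in> X) \<and> (\<forall>i. dist (f (xs i)) (xs (Suc i)) \<le> \<delta>)) \<longrightarrow>
        (\<exists>x\<in>X. \<forall>i. dist (xs i) ((f ^^ i) x) \<le> \<epsilon>))"

definition strict_periodic_shadowing :: "'a::metric_space set \<Rightarrow> ('a \<Rightarrow> 'a) \<Rightarrow> bool" where
  "strict_periodic_shadowing X f \<longleftrightarrow>
     (\<forall>\<epsilon>>0. \<exists>\<delta>>0. \<forall>m\<ge>1. \<forall>xs::nat \<Rightarrow> 'a.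
        ((\<forall>i\<le>m. xs i \<in> X) \<and> (\<forall>i<m. dist (f (xs i)) (xs (Suc i)) \<le> \<delta>) \<and> xs 0 = xs m) \<longrightarrow>
        (\<exists>p\<in>X. (f ^^ m) p = p \<and> (\<forall>i\<le>m. dist (xs i) ((f ^^ i) p) \<le> \<epsilon>)))"

definition Per :: "'a set \<Rightarrow> ('a \<Rightarrow> 'a) \<Rightarrow> 'a set" where
  "Per X f = {x\<in>X. \<exists>n\<ge>1. (f ^^ n) x = x}"

definition CR :: "'a::metric_space set \<Rightarrow> ('a \<Rightarrow> 'a) \<Rightarrow> 'a set" where
  "CR X f = {x\<in>X. \<forall>\<delta>>0. \<exists>k\<ge>1. \<exists>xs::nat \<Rightarrow> 'a.
      (\<forall>i\<le>k. xs i \<in> X) \<and> xs 0 = x \<and> xs k = x \<and>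
      (\<forall>i<k. dist (f (xs i)) (xs (Suc i)) \<le> \<delta>)}"

definition property_star :: "'a::metric_space set \<Rightarrow> bool" where
  "property_star X \<longleftrightarrow>
     (\<forall>\<epsilon>>0. \<exists>\<delta>>0. \<forall>n\<ge>1. \<forall>xs ys :: nat \<Rightarrow> 'a.
        ((\<forall>i<n. xs i \<in> X \<and> ys i \<in> X) \<and> inj_on xs {..<n} \<and> inj_on ys {..<n} \<and>
         (\<forall>i<n. dist (xs i) (ys i) < \<delta>)) \<longrightarrow>
        (\<exists>\<phi>\<in>homeos X. Dhom X \<phi> id < \<epsilon> \<and> (\<forall>i<n. \<phi> (xs i) = ys i)))"

end

theory Submission
  imports Defs
begin

lemma perturb_inj:
  fixes x :: "nat \<Rightarrow> 'a::metric_space"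
  assumes "\<forall>i\<le>k. x i islimpt X" "\<forall>i\<le>k. x i \<in> X" "r > 0"
  shows "\<exists>z. (\<forall>i\<le>k. z i \<in> X \<and> dist (x i) (z i) < r) \<and> inj_on z {..k}"
  using assms
proof (induction k)
  case 0
  then show ?case by (auto intro: exI[of _ x])
next
  case (Suc k)
  then obtain z where z: "\<forall>i\<le>k. z i \<in> X \<and> dist (x i) (z i) < r" "inj_on z {..k}"
    by auto
  have "infinite (X \<inter> ball (x (Suc k)) r)"
    using Suc.prems islimpt_eq_infinite_ball by blast
  then have "infinite (X \<inter> ball (x (Suc k)) r - z ` {..k})"
    by (simp add: Diff_infinite_finite)
  then obtain w where w: "w \<in> X \<inter> ball (x (Suc k)) r - z ` {..k}"
    using infinite_imp_nonempty by blast
  define z' where "z' = z(Suc k := w)"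
  have "\<forall>i\<le>Suc k. z' i \<in> X \<and> dist (x i) (z' i) < r"
    using z w by (auto simp: z'_def le_Suc_eq)
  moreover have "inj_on z' {..Suc k}"
  proof -
    have "{..Suc k} = insert (Suc k) {..k}" by auto
    moreover have "inj_on z' {..k}" using z(2) by (auto simp: z'_def inj_on_def)
    moreover have "z' (Suc k) \<notin> z' ` {..k}" using w by (auto simp: z'_def)
    ultimately show ?thesis by auto
  qed
  ultimately show ?case by blast
qed

lemma perturb:
  fixes xs :: "nat \<Rightarrow> 'a::metric_space"
  assumes "\<forall>i\<le>k. xs i islimpt X" "\<forall>i\<le>k. xs i \<in> X" "r > 0"
  shows "\<exists>ys. (\<forall>i\<le>k. ys i \<in> X \<and> dist (xs i) (ys i) < r) \<and> inj_on ys {..<k}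
     \<and> inj_on (\<lambda>i. ys (Suc i)) {..<k} \<and> (xs 0 = xs k \<longrightarrow> ys 0 = ys k)"
proof -
  obtain z where z: "\<forall>i\<le>k. z i \<in> X \<and> dist (xs i) (z i) < r" "inj_on z {..k}"
    using perturb_inj[OF assms] by blast
  show ?thesis
  proof (cases "xs 0 = xs k")
    case False
    then show ?thesis using z
      apply (intro exI[of _ z])
      apply (simp add: inj_on_def)
      by (metis Suc_leI nat.inject atMost_iff less_imp_le_nat lessThan_iff)
  next
    case True
    define ys where "ys = z(k := z 0)"
    have "\<forall>i\<le>k. ys i \<in> X \<and> dist (xs i) (ys i) < r"
      using z True by (auto simp: ys_def)
    moreover have "inj_on ys {..<k}" using z(2) by (auto simp: ys_def inj_on_def)
    moreover have "inj_on (\<lambda>i. ys (Suc i)) {..<k}"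
      using z(2) unfolding inj_on_def ys_def
      by (smt (verit) Suc_leI atMost_iff fun_upd_apply le0 lessThan_iff less_imp_le_nat nat.inject nat.simps(3))
    moreover have "ys 0 = ys k" by (simp add: ys_def)
    ultimately show ?thesis by blast
  qed
qed

lemma dC0_pt:
  assumes "bounded X" "x \<in> X" "\<And>x. x \<in> X \<Longrightarrow> f x \<in> X" "\<And>x. x \<in> X \<Longrightarrow> g x \<in> X"
    "dC0 X f g < e"
  shows "dist (f x) (g x) < e"
proof -
  obtain a B where B: "\<forall>y\<in>X. dist a y \<le> B"
    using assms(1) bounded_def by blast
  have "bdd_above ((\<lambda>x. dist (f x) (g x)) ` X)"
  proof (rule bdd_aboveI2)
    fix y assume "y \<in> X"
    then show "dist (f y) (g y) \<le> 2 * B"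
    proof -
      have "dist a (f y) \<le> B" "dist a (g y) \<le> B" using B assms(3,4) \<open>y \<in> X\<close> by auto
      then show ?thesis using dist_triangle3[of "f y" "g y" a] by linarith
    qed
  qed
  then have "dist (f x) (g x) \<le> dC0 X f g"
    unfolding dC0_def using assms(2) by (rule cSUP_upper2) simp
  then show ?thesis using assms(5) by linarith
qed

lemma dC0_le:
  assumes "X \<noteq> {}" "\<And>x. x \<in> X \<Longrightarrow> dist (f x) (g x) \<le> e"
  shows "dC0 X f g \<le> e"
  unfolding dC0_def using assms by (intro cSUP_least) auto

lemma funpow_cont:
  assumes "continuous_on X f" "f ` X \<subseteq> X"
  shows "continuous_on X (f ^^ i) \<and> (f ^^ i) ` X \<subseteq> X"
proof (induction i)
  case 0 then show ?case by (simp add: continuous_on_id)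
next
  case (Suc i)
  then show ?case using assms
    by (auto simp del: funpow.simps simp add: funpow_Suc_right o_def
        intro!: continuous_on_compose2[of X "f^^i" X f])
qed

lemma core:
  fixes X :: "'a::metric_space set"
  assumes cX: "compact X" and lim: "\<forall>x\<in>X. x islimpt X" and ps: "property_star X"
    and hf: "homeomorphism X X f fi" and ts: "topologically_stable X f" and e: "e > 0"
  shows "\<exists>\<delta>>0. \<forall>k\<ge>1. \<forall>xs. (\<forall>i\<le>k. xs i \<in> X) \<and> (\<forall>i<k. dist (f (xs i)) (xs (Suc i)) \<le> \<delta>) \<longrightarrow>
     (\<exists>p\<in>X. (\<forall>i\<le>k. dist (xs i) ((f^^i) p) \<le> e) \<and> (xs 0 = xs k \<longrightarrow> (f^^k) p = p))"
proof -
  have fX: "\<And>x. x \<in> X \<Longrightarrow> f x \<in> X" and fiX: "\<And>x. x \<in> X \<Longrightarrow> fi x \<in> X"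
    and fif: "\<And>x. x \<in> X \<Longrightarrow> fi (f x) = x" and ffi: "\<And>x. x \<in> X \<Longrightarrow> f (fi x) = x"
    using hf unfolding homeomorphism_def by auto
  have injf: "inj_on f X" using fif by (rule inj_on_inverseI)
  have bX: "bounded X" using cX compact_imp_bounded by blast
  obtain \<delta>1 where d1: "\<delta>1 > 0" and TS: "\<forall>g\<in>homeos X. Dhom X f g < \<delta>1 \<longrightarrow>
        (\<exists>h. continuous_on X h \<and> h ` X \<subseteq> X \<and> dC0 X h id < e/2 \<and>
             (\<forall>x\<in>X. h (g x) = f (h x)))"
    using ts[unfolded topologically_stable_def, THEN spec[where x="e/2"], THEN mp, OF half_gt_zero[OF e]] by blast
  have "uniformly_continuous_on X fi"
    using hf cX by (intro compact_uniformly_continuous) (auto simp: homeomorphism_def)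
  then have uc1: "\<forall>e>0. \<exists>d>0. \<forall>x\<in>X. \<forall>x'\<in>X. dist x' x < d \<longrightarrow> dist (fi x') (fi x) < e"
    unfolding uniformly_continuous_on_def by blast
  have "\<delta>1/2 > 0" using d1 by simp
  from uc1[THEN spec[where x="\<delta>1/2"], THEN mp, OF this]
  obtain \<eta>1 where eta1: "\<eta>1 > 0" "\<forall>x\<in>X. \<forall>x'\<in>X. dist x' x < \<eta>1 \<longrightarrow> dist (fi x') (fi x) < \<delta>1/2"
    by blast
  define e' where "e' = min (\<delta>1/2) \<eta>1"
  have e': "e' > 0" using d1 eta1 by (simp add: e'_def)
  obtain \<delta>2 where d2: "\<delta>2 > 0" and PS: "\<forall>n\<ge>1. \<forall>xs ys :: nat \<Rightarrow> 'a.
        ((\<forall>i<n. xs i \<in> X \<and> ys i \<in> X) \<and> inj_on xs {..<n} \<and> inj_on ys {..<n} \<and>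
         (\<forall>i<n. dist (xs i) (ys i) < \<delta>2)) \<longrightarrow>
        (\<exists>\<phi>\<in>homeos X. Dhom X \<phi> id < e' \<and> (\<forall>i<n. \<phi> (xs i) = ys i))"
    using ps[unfolded property_star_def, THEN spec[where x="e'"], THEN mp, OF e'] by blast
  have "uniformly_continuous_on X f"
    using hf cX by (intro compact_uniformly_continuous) (auto simp: homeomorphism_def)
  then have uc2: "\<forall>e>0. \<exists>d>0. \<forall>x\<in>X. \<forall>x'\<in>X. dist x' x < d \<longrightarrow> dist (f x') (f x) < e"
    unfolding uniformly_continuous_on_def by blast
  have "\<delta>2/3 > 0" using d2 by simp
  from uc2[THEN spec[where x="\<delta>2/3"], THEN mp, OF this]
  obtain \<eta>2 where eta2: "\<eta>2 > 0" "\<forall>x\<in>X. \<forall>x'\<in>X. dist x' x < \<eta>2 \<longrightarrow> dist (f x') (f x) < \<delta>2/3"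
    by blast
  show ?thesis
  proof (intro exI[of _ "\<delta>2/3"] conjI allI impI)
    show "\<delta>2/3 > 0" using d2 by simp
    fix k :: nat and xs
    assume k: "k \<ge> 1" and xsH: "(\<forall>i\<le>k. xs i \<in> X) \<and> (\<forall>i<k. dist (f (xs i)) (xs (Suc i)) \<le> \<delta>2/3)"
    define r where "r = min (e/2) (min \<eta>2 (\<delta>2/3))"
    have r: "r > 0" using e eta2 d2 by (simp add: r_def)
    obtain ys where ys: "\<forall>i\<le>k. ys i \<in> X \<and> dist (xs i) (ys i) < r" "inj_on ys {..<k}"
      "inj_on (\<lambda>i. ys (Suc i)) {..<k}" "xs 0 = xs k \<longrightarrow> ys 0 = ys k"
      using perturb[of k xs X r] lim xsH r by auto
    have close: "\<forall>i<k. dist (f (ys i)) (ys (Suc i)) < \<delta>2"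
    proof (intro allI impI)
      fix i assume i: "i < k"
      have a: "dist (f (ys i)) (f (xs i)) < \<delta>2/3"
        using eta2(2) ys(1) xsH i r_def by (simp add: dist_commute)
      have b: "dist (f (xs i)) (xs (Suc i)) \<le> \<delta>2/3" using xsH i by auto
      have c: "dist (xs (Suc i)) (ys (Suc i)) < \<delta>2/3" using ys(1) i r_def by auto
      have "dist (f (ys i)) (ys (Suc i)) \<le> dist (f (ys i)) (f (xs i)) + dist (f (xs i)) (xs (Suc i)) + dist (xs (Suc i)) (ys (Suc i))"
        using dist_triangle[of "f (ys i)" "xs (Suc i)" "f (xs i)"] dist_triangle[of "f (ys i)" "ys (Suc i)" "xs (Suc i)"]
        by linarith
      then show "dist (f (ys i)) (ys (Suc i)) < \<delta>2" using a b c by linarith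
    qed
    have injfy: "inj_on (\<lambda>i. f (ys i)) {..<k}"
      using ys(1,2) injf unfolding inj_on_def by (metis lessThan_iff less_imp_le_nat)
    obtain \<phi> where phi: "\<phi> \<in> homeos X" "Dhom X \<phi> id < e'" "\<forall>i<k. \<phi> (f (ys i)) = ys (Suc i)"
    proof -
      have "\<forall>i<k. f (ys i) \<in> X \<and> ys (Suc i) \<in> X" using ys(1) fX by (simp add: Suc_le_eq)
      then show ?thesis
        using PS[rule_format, of k "\<lambda>i. f (ys i)" "\<lambda>i. ys (Suc i)"] k close injfy ys(3) that
        by blast
    qed
    obtain \<phi>i where hphi: "homeomorphism X X \<phi> \<phi>i" using phi(1) unfolding homeos_def by blast
    have pX: "\<And>x. x \<in> X \<Longrightarrow> \<phi> x \<in> X" and piX: "\<And>x. x \<in> X \<Longrightarrow> \<phi>i x \<in> X"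
      and pip: "\<And>x. x \<in> X \<Longrightarrow> \<phi>i (\<phi> x) = x" and ppi: "\<And>x. x \<in> X \<Longrightarrow> \<phi> (\<phi>i x) = x"
      using hphi unfolding homeomorphism_def by auto
    have injp: "inj_on \<phi> X" using pip by (rule inj_on_inverseI)
    have invp: "\<And>y. y \<in> X \<Longrightarrow> inv_into X \<phi> y = \<phi>i y"
      using injp piX ppi by (simp add: inv_into_f_eq)
    have invid: "\<And>y. y \<in> X \<Longrightarrow> inv_into X id y = y"
      by (simp add: inv_into_f_eq)
    have pclose: "\<And>x. x \<in> X \<Longrightarrow> dist (\<phi> x) x < e'"
      using dC0_pt[OF bX _ pX, where g=id and e=e'] phi(2) by (auto simp: Dhom_def)
    have piclose: "\<And>y. y \<in> X \<Longrightarrow> dist (\<phi>i y) y < e'"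
    proof -
      fix y assume y: "y \<in> X"
      have "dist (inv_into X \<phi> y) (inv_into X id y) < e'"
        using dC0_pt[OF bX y, of "inv_into X \<phi>" "inv_into X id" e'] phi(2) invp piX invid
        by (auto simp: Dhom_def)
      then show "dist (\<phi>i y) y < e'" using invp invid y by simp
    qed
    define g where "g = \<phi> \<circ> f"
    have hg: "homeomorphism X X g (fi \<circ> \<phi>i)"
      unfolding g_def by (rule homeomorphism_compose[OF hf hphi])
    then have gH: "g \<in> homeos X" unfolding homeos_def by blast
    have gX: "\<And>x. x \<in> X \<Longrightarrow> g x \<in> X" using fX pX by (simp add: g_def)
    have injg: "inj_on g X" using hg unfolding homeomorphism_def by (metis comp_apply inj_on_inverseI)
    have Xne: "X \<noteq> {}" using xsH by auto
    have "dC0 X f g \<le> \<delta>1/2"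
    proof (rule dC0_le[OF Xne])
      fix x assume "x \<in> X"
      then have "dist (\<phi> (f x)) (f x) < e'" using pclose fX by blast
      then show "dist (f x) (g x) \<le> \<delta>1/2" by (simp add: g_def dist_commute e'_def)
    qed
    moreover have "dC0 X (inv_into X f) (inv_into X g) \<le> \<delta>1/2"
    proof (rule dC0_le[OF Xne])
      fix y assume y: "y \<in> X"
      have i1: "inv_into X f y = fi y" using injf fiX ffi y by (simp add: inv_into_f_eq)
      have i2: "inv_into X g y = fi (\<phi>i y)"
        using injg fiX piX ffi ppi y by (intro inv_into_f_eq) (auto simp: g_def)
      have "dist y (\<phi>i y) < \<eta>1" using piclose[OF y] by (simp add: e'_def dist_commute)
      then have "dist (fi y) (fi (\<phi>i y)) < \<delta>1/2" using eta1(2) y piX by blast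
      then show "dist (inv_into X f y) (inv_into X g y) \<le> \<delta>1/2" using i1 i2 by simp
    qed
    ultimately have "Dhom X f g < \<delta>1" using d1 by (simp add: Dhom_def)
    then obtain h where h: "continuous_on X h" "h ` X \<subseteq> X" "dC0 X h id < e/2"
      "\<forall>x\<in>X. h (g x) = f (h x)"
      using TS gH by blast
    have hX: "\<And>x. x \<in> X \<Longrightarrow> h x \<in> X" using h(2) by blast
    have hclose: "\<And>x. x \<in> X \<Longrightarrow> dist (h x) x < e/2"
      using dC0_pt[OF bX _ hX, where g=id and e="e/2"] h(3) by auto
    have giter: "\<And>i. i \<le> k \<Longrightarrow> (g^^i) (ys 0) = ys i"
    proof -
      fix i show "i \<le> k \<Longrightarrow> (g^^i) (ys 0) = ys i"
      proof (induction i)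
        case 0 then show ?case by simp
      next
        case (Suc i)
        then show ?case using phi(3) by (simp add: g_def)
      qed
    qed
    have gXi: "\<And>i x. x \<in> X \<Longrightarrow> (g^^i) x \<in> X"
    proof -
      fix i x assume "x \<in> X" then show "(g^^i) x \<in> X"
        by (induction i) (auto intro: gX)
    qed
    have hiter: "\<And>i x. x \<in> X \<Longrightarrow> h ((g^^i) x) = (f^^i) (h x)"
    proof -
      fix i x assume x: "x \<in> X" then show "h ((g^^i) x) = (f^^i) (h x)"
        by (induction i) (auto simp: h(4) gXi)
    qed
    have y0: "ys 0 \<in> X" using ys(1) by auto
    define p where "p = h (ys 0)"
    have fp: "\<And>i. i \<le> k \<Longrightarrow> (f^^i) p = h (ys i)"
      using hiter[OF y0] giter unfolding p_def by metis
    show "\<exists>p\<in>X. (\<forall>i\<le>k. dist (xs i) ((f^^i) p) \<le> e) \<and> (xs 0 = xs k \<longrightarrow> (f^^k) p = p)"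
    proof (intro bexI conjI allI impI)
      show "p \<in> X" using hX y0 p_def by simp
      fix i assume i: "i \<le> k"
      have "dist (xs i) (ys i) < e/2" using ys(1) i r_def by auto
      moreover have "dist (ys i) (h (ys i)) < e/2" using hclose ys(1) i by (simp add: dist_commute)
      ultimately show "dist (xs i) ((f^^i) p) \<le> e" unfolding fp[OF i] using dist_triangle[of "xs i" "h (ys i)" "ys i"]
        by linarith
    next
      assume "xs 0 = xs k"
      then show "(f^^k) p = p" using fp[of k] ys(4) p_def by simp
    qed
  qed
qed

theorem theorem1p1:
  fixes X :: "'a::metric_space set" and f :: "'a \<Rightarrow> 'a"
  assumes "compact X"
    and "\<forall>x\<in>X. x islimpt X"
    and "property_star X"
    and "f \<in> homeos X"
    and "topologically_stable X f"
  shows "shadowing X f \<and> strict_periodic_shadowing X f \<and> CR X f = closure (Per X f)"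
proof -
  obtain fi where hf: "homeomorphism X X f fi" using assms(4) unfolding homeos_def by blast
  have cf: "continuous_on X f" and fX: "f ` X \<subseteq> X" using hf unfolding homeomorphism_def by auto
  have fpX: "\<And>i x. x \<in> X \<Longrightarrow> (f^^i) x \<in> X" using funpow_cont[OF cf fX] by blast
  note C = core[OF assms(1,2,3) hf assms(5)]
  have sh: "shadowing X f"
    unfolding shadowing_def
  proof (intro allI impI)
    fix \<epsilon> :: real assume e: "\<epsilon> > 0"
    obtain \<delta> where d: "\<delta> > 0" and D: "\<forall>k\<ge>1. \<forall>xs. (\<forall>i\<le>k. xs i \<in> X) \<and> (\<forall>i<k. dist (f (xs i)) (xs (Suc i)) \<le> \<delta>) \<longrightarrow>
     (\<exists>p\<in>X. (\<forall>i\<le>k. dist (xs i) ((f^^i) p) \<le> \<epsilon>/2) \<and> (xs 0 = xs k \<longrightarrow> (f^^k) p = p))"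
      using C[OF half_gt_zero[OF e]] by blast
    show "\<exists>\<delta>>0. \<forall>xs. (\<forall>i. xs i \<in> X) \<and> (\<forall>i. dist (f (xs i)) (xs (Suc i)) \<le> \<delta>) \<longrightarrow>
             (\<exists>x\<in>X. \<forall>i. dist (xs i) ((f ^^ i) x) \<le> \<epsilon>)"
    proof (intro exI[of _ \<delta>] conjI allI impI)
      show "\<delta> > 0" by (rule d)
      fix xs assume xs: "(\<forall>i. xs i \<in> X) \<and> (\<forall>i. dist (f (xs i)) (xs (Suc i)) \<le> \<delta>)"
      have "\<forall>N. \<exists>p. p \<in> X \<and> (\<forall>i\<le>Suc N. dist (xs i) ((f^^i) p) \<le> \<epsilon>/2)"
      proof
        fix N
        have "\<exists>p\<in>X. (\<forall>i\<le>Suc N. dist (xs i) ((f^^i) p) \<le> \<epsilon>/2) \<and> (xs 0 = xs (Suc N) \<longrightarrow> (f^^Suc N) p = p)"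
          using D[rule_format, of "Suc N" xs] xs by simp
        then show "\<exists>p. p \<in> X \<and> (\<forall>i\<le>Suc N. dist (xs i) ((f^^i) p) \<le> \<epsilon>/2)" by blast
      qed
      then obtain P where P: "\<And>N. P N \<in> X" "\<And>N i. i \<le> Suc N \<Longrightarrow> dist (xs i) ((f^^i) (P N)) \<le> \<epsilon>/2"
        by metis
      obtain q \<sigma> where q: "q \<in> X" "strict_mono \<sigma>" "(P \<circ> \<sigma>) \<longlonglongrightarrow> q"
        using assms(1) P(1) unfolding compact_def by metis
      show "\<exists>x\<in>X. \<forall>i. dist (xs i) ((f ^^ i) x) \<le> \<epsilon>"
      proof (intro bexI[of _ q] allI)
        show "q \<in> X" by (rule q(1))
        fix i
        have "continuous_on X (f^^i)" using funpow_cont[OF cf fX] by blast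
        then have "(\<lambda>n. (f^^i) ((P \<circ> \<sigma>) n)) \<longlonglongrightarrow> (f^^i) q"
          using q P(1) by (intro continuous_on_tendsto_compose[of X "f^^i" "P \<circ> \<sigma>"]) auto
        then have lim: "(\<lambda>n. dist (xs i) ((f^^i) ((P \<circ> \<sigma>) n))) \<longlonglongrightarrow> dist (xs i) ((f^^i) q)"
          by (intro tendsto_dist tendsto_const)
        have "\<forall>n\<ge>i. dist (xs i) ((f^^i) ((P \<circ> \<sigma>) n)) \<le> \<epsilon>/2"
        proof (intro allI impI)
          fix n assume "n \<ge> i"
          moreover have "n \<le> \<sigma> n" using q(2) by (rule seq_suble)
          ultimately have "i \<le> Suc (\<sigma> n)" by simp
          then show "dist (xs i) ((f^^i) ((P \<circ> \<sigma>) n)) \<le> \<epsilon>/2" using P(2) by simp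
        qed
        then have "dist (xs i) ((f^^i) q) \<le> \<epsilon>/2"
          using LIMSEQ_le_const2[OF lim] by blast
        then show "dist (xs i) ((f ^^ i) q) \<le> \<epsilon>" using e by linarith
      qed
    qed
  qed
  have sp: "strict_periodic_shadowing X f"
    unfolding strict_periodic_shadowing_def
  proof (intro allI impI)
    fix \<epsilon> :: real assume e: "\<epsilon> > 0"
    obtain \<delta> where d: "\<delta> > 0" and D: "\<forall>k\<ge>1. \<forall>xs. (\<forall>i\<le>k. xs i \<in> X) \<and> (\<forall>i<k. dist (f (xs i)) (xs (Suc i)) \<le> \<delta>) \<longrightarrow>
     (\<exists>p\<in>X. (\<forall>i\<le>k. dist (xs i) ((f^^i) p) \<le> \<epsilon>) \<and> (xs 0 = xs k \<longrightarrow> (f^^k) p = p))"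
      using C[OF e] by blast
    show "\<exists>\<delta>>0. \<forall>m\<ge>1. \<forall>xs. (\<forall>i\<le>m. xs i \<in> X) \<and> (\<forall>i<m. dist (f (xs i)) (xs (Suc i)) \<le> \<delta>) \<and> xs 0 = xs m \<longrightarrow>
        (\<exists>p\<in>X. (f ^^ m) p = p \<and> (\<forall>i\<le>m. dist (xs i) ((f ^^ i) p) \<le> \<epsilon>))"
    proof (intro exI[of _ \<delta>] conjI allI impI)
      show "\<delta> > 0" by (rule d)
      fix m :: nat and xs assume m: "m \<ge> 1"
        and xs: "(\<forall>i\<le>m. xs i \<in> X) \<and> (\<forall>i<m. dist (f (xs i)) (xs (Suc i)) \<le> \<delta>) \<and> xs 0 = xs m"
      have "(\<forall>i\<le>m. xs i \<in> X) \<and> (\<forall>i<m. dist (f (xs i)) (xs (Suc i)) \<le> \<delta>)" using xs by simp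
      note D[THEN spec[where x=m], THEN mp, OF m, THEN spec[where x=xs], THEN mp, OF this]
      then obtain p where "p \<in> X" "\<forall>i\<le>m. dist (xs i) ((f^^i) p) \<le> \<epsilon>" "xs 0 = xs m \<longrightarrow> (f^^m) p = p"
        by blast
      then show "\<exists>p\<in>X. (f ^^ m) p = p \<and> (\<forall>i\<le>m. dist (xs i) ((f ^^ i) p) \<le> \<epsilon>)"
        using xs by blast
    qed
  qed
  have cr1: "CR X f \<subseteq> closure (Per X f)"
  proof
    fix x assume x: "x \<in> CR X f"
    show "x \<in> closure (Per X f)"
      unfolding closure_approachable
    proof (intro allI impI)
      fix e :: real assume e: "e > 0"
      obtain \<delta> where d: "\<delta> > 0" and D: "\<forall>k\<ge>1. \<forall>xs. (\<forall>i\<le>k. xs i \<in> X) \<and> (\<forall>i<k. dist (f (xs i)) (xs (Suc i)) \<le> \<delta>) \<longrightarrow>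
       (\<exists>p\<in>X. (\<forall>i\<le>k. dist (xs i) ((f^^i) p) \<le> e/2) \<and> (xs 0 = xs k \<longrightarrow> (f^^k) p = p))"
        using C[OF half_gt_zero[OF e]] by blast
      obtain k xs where k: "k \<ge> 1" "\<forall>i\<le>k. xs i \<in> X" "xs 0 = x" "xs k = x"
        "\<forall>i<k. dist (f (xs i)) (xs (Suc i)) \<le> \<delta>"
      proof -
        have "\<forall>\<delta>>0. \<exists>k\<ge>1. \<exists>xs::nat \<Rightarrow> 'a. (\<forall>i\<le>k. xs i \<in> X) \<and> xs 0 = x \<and> xs k = x \<and>
          (\<forall>i<k. dist (f (xs i)) (xs (Suc i)) \<le> \<delta>)" using x unfolding CR_def by blast
        from this[THEN spec[where x=\<delta>], THEN mp, OF d] show ?thesis using that by blast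
      qed
      obtain p where p: "p \<in> X" "\<forall>i\<le>k. dist (xs i) ((f^^i) p) \<le> e/2" "(f^^k) p = p"
      proof -
        have "(\<forall>i\<le>k. xs i \<in> X) \<and> (\<forall>i<k. dist (f (xs i)) (xs (Suc i)) \<le> \<delta>)" using k by blast
        note D[THEN spec[where x=k], THEN mp, OF k(1), THEN spec[where x=xs], THEN mp, OF this]
        moreover have "xs 0 = xs k" using k(3,4) by simp
        ultimately show ?thesis using that by blast
      qed
      have "p \<in> Per X f" using p k unfolding Per_def by blast
      moreover have "dist p x < e" using p(2)[rule_format, of 0] k(3) e by (simp add: dist_commute)
      ultimately show "\<exists>y\<in>Per X f. dist y x < e" by blast
    qed
  qed
  have cr2: "closure (Per X f) \<subseteq> CR X f"
  proof
    fix x assume x: "x \<in> closure (Per X f)"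
    have "Per X f \<subseteq> X" unfolding Per_def by auto
    then have xX: "x \<in> X"
      using x closure_minimal compact_imp_closed[OF assms(1)] by blast
    show "x \<in> CR X f"
      unfolding CR_def
    proof (intro CollectI conjI allI impI xX)
      fix \<delta> :: real assume d: "\<delta> > 0"
      have "\<forall>x\<in>X. \<forall>e>0. \<exists>d>0. \<forall>x'\<in>X. dist x' x < d \<longrightarrow> dist (f x') (f x) < e"
        using cf continuous_on_iff by blast
      moreover have "\<delta>/3 > 0" using d by simp
      ultimately obtain c where c: "c > 0" "\<forall>x'\<in>X. dist x' x < c \<longrightarrow> dist (f x') (f x) < \<delta>/3"
        using xX by blast
      have "min c (\<delta>/3) > 0" using c d by simp
      then obtain p where p: "p \<in> Per X f" "dist p x < min c (\<delta>/3)"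
        using x unfolding closure_approachable by blast
      obtain n where n: "n \<ge> 1" "(f^^n) p = p" "p \<in> X" using p(1) unfolding Per_def by blast
      define xs where "xs i = (if i = 0 \<or> i = n then x else (f^^i) p)" for i
      have fp: "dist (f p) (f x) < \<delta>/3" using c(2) p(2) n(3) by auto
      show "\<exists>k\<ge>1. \<exists>xs. (\<forall>i\<le>k. xs i \<in> X) \<and> xs 0 = x \<and> xs k = x \<and> (\<forall>i<k. dist (f (xs i)) (xs (Suc i)) \<le> \<delta>)"
      proof (intro exI[of _ n] exI[of _ xs] conjI allI impI)
        show "n \<ge> 1" by (rule n(1))
        fix i assume "i \<le> n" then show "xs i \<in> X" using xX fpX n(3) by (simp add: xs_def)
      next
        show "xs 0 = x" by (simp add: xs_def)
        show "xs n = x" by (simp add: xs_def)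
      next
        fix i assume i: "i < n"
        show "dist (f (xs i)) (xs (Suc i)) \<le> \<delta>"
        proof (cases "i = 0")
          case True
          show ?thesis
          proof (cases "n = 1")
            case True
            then have "f p = p" using n(2) by simp
            then have "dist (f x) x \<le> dist (f x) (f p) + dist p x"
              by (metis dist_triangle)
            then show ?thesis using \<open>i = 0\<close> True fp p(2) d by (simp add: xs_def dist_commute)
          next
            case False
            then have "xs (Suc i) = f p" "xs i = x" using \<open>i = 0\<close> by (auto simp: xs_def)
            then have "dist (f (xs i)) (xs (Suc i)) = dist (f p) (f x)" by (simp add: dist_commute)
            then show ?thesis using fp d zero_le_dist[of "f p" "f x"] by linarith
          qed
        next
          case False
          show ?thesis
          proof (cases "Suc i = n")
            case True
            then have "f ((f^^i) p) = p" using n(2) by (metis funpow.simps(2) o_apply)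
            then show ?thesis using True False p(2) d by (simp add: xs_def)
          next
            case F2: False
            then show ?thesis using False i d by (simp add: xs_def)
          qed
        qed
      qed
    qed
  qed
  show ?thesis using sh sp cr1 cr2 by blast
qed

end
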